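(* Let $C$ be a cycle of length at least 4 in a 3-connected graph $F$, and let $K$ be (the vertex set of) a connected component of the reduced conflict graph $\mathrm{Con}^-(C)$. Then every vertex of $C$ belongs to $\mathrm{att}(K)=\bigcup_{X\in K}\mathrm{att}(X)$.
   Context: Let $F$ be a graph and $C$ a cycle of $F$. A $C$-bridge is either a chord of $C$ (an edge not in $C$ with both endpoints on $C$) or a connected component of $F-V(C)$ together with all edges joining it to $C$ and their endpoints on $C$. The attachments $\mathrm{att}(X)$ of a $C$-bridge $X$ are the vertices of $C$ incident to edges of $X$. Two pairs $\{x,y\}$, $\{u,v\}$ of four distinct vertices of $C$ alternate if each of the two arcs of $C$ with endpoints $x,y$ contains exactly one of $u,v$; two vertex sets $X,U\subseteq V(C)$ alternate if some pair from $X$ alternates with some pair from $U$. Two $C$-bridges have a four-vertex conflict if their attachment sets alternate. The reduced conflict graph $\mathrm{Con}^-(C)$ has the $C$-bridges as vertices, two adjacent iff they have a four-vertex conflict. *)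

theory Defs
  imports Main
begin

definition simple_graph :: "'a set \<Rightarrow> 'a set set \<Rightarrow> bool" where
  "simple_graph V E \<longleftrightarrow> finite V \<and>
     (\<forall>e\<in>E. \<exists>u v. e = {u, v} \<and> u \<noteq> v \<and> u \<in> V \<and> v \<in> V)"

definition adj_in :: "'a set set \<Rightarrow> 'a set \<Rightarrow> ('a \<times> 'a) set" where
  "adj_in E W = {(x, y). {x, y} \<in> E \<and> x \<in> W \<and> y \<in> W}"

definition connected_set :: "'a set set \<Rightarrow> 'a set \<Rightarrow> bool" where
  "connected_set E W \<longleftrightarrow> (\<forall>u\<in>W. \<forall>v\<in>W. (u, v) \<in> (adj_in E W)\<^sup>*)"

definition k_connected :: "nat \<Rightarrow> 'a set \<Rightarrow> 'a set set \<Rightarrow> bool" where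
  "k_connected k V E \<longleftrightarrow> simple_graph V E \<and> card V > k \<and>
     (\<forall>S. S \<subseteq> V \<longrightarrow> card S < k \<longrightarrow> connected_set E (V - S))"

definition is_cycle :: "'a set \<Rightarrow> 'a set set \<Rightarrow> 'a list \<Rightarrow> bool" where
  "is_cycle V E cs \<longleftrightarrow> distinct cs \<and> length cs \<ge> 3 \<and> set cs \<subseteq> V \<and>
     (\<forall>i < length cs. {cs ! i, cs ! (Suc i mod length cs)} \<in> E)"

definition cycle_edges :: "'a list \<Rightarrow> 'a set set" where
  "cycle_edges cs = {{cs ! i, cs ! (Suc i mod length cs)} | i. i < length cs}"

definition component_of :: "'a set set \<Rightarrow> 'a set \<Rightarrow> 'a set \<Rightarrow> bool" where
  "component_of E W H \<longleftrightarrow> (\<exists>v\<in>W. H = {u \<in> W. (v, u) \<in> (adj_in E W)\<^sup>*})"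

text \<open>A C-bridge is represented as a pair (vertex set, edge set).
  Chords: (e, {e}).  Component bridges: the component H together with all edges
  incident with H and their endpoints on C.\<close>
definition bridges :: "'a set \<Rightarrow> 'a set set \<Rightarrow> 'a list \<Rightarrow> ('a set \<times> 'a set set) set" where
  "bridges V E cs =
     {(e, {e}) | e. e \<in> E \<and> e \<notin> cycle_edges cs \<and> e \<subseteq> set cs}
   \<union> {(H \<union> {v \<in> set cs. \<exists>u\<in>H. {u, v} \<in> E}, {e \<in> E. e \<inter> H \<noteq> {}}) | H.
        component_of E (V - set cs) H}"

definition att :: "'a list \<Rightarrow> ('a set \<times> 'a set set) \<Rightarrow> 'a set" where
  "att cs X = set cs \<inter> \<Union> (snd X)"

text \<open>w lies strictly inside the arc of the cycle list between x and y
  (the arc not passing through the wrap-around position).\<close>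
definition inside_arc :: "'a list \<Rightarrow> 'a \<Rightarrow> 'a \<Rightarrow> 'a \<Rightarrow> bool" where
  "inside_arc cs x y w \<longleftrightarrow> (\<exists>i j k. i < length cs \<and> j < length cs \<and> k < length cs \<and>
      cs ! i = x \<and> cs ! j = y \<and> cs ! k = w \<and> min i j < k \<and> k < max i j)"

text \<open>Pairs {x,y} and {u,v} of four distinct vertices of C alternate: each of the
  two arcs between x and y contains exactly one of u, v.\<close>
definition pairs_alternate :: "'a list \<Rightarrow> 'a \<Rightarrow> 'a \<Rightarrow> 'a \<Rightarrow> 'a \<Rightarrow> bool" where
  "pairs_alternate cs x y u v \<longleftrightarrow> distinct [x, y, u, v] \<and> {x, y, u, v} \<subseteq> set cs \<and>
     (inside_arc cs x y u \<noteq> inside_arc cs x y v)"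

definition sets_alternate :: "'a list \<Rightarrow> 'a set \<Rightarrow> 'a set \<Rightarrow> bool" where
  "sets_alternate cs X U \<longleftrightarrow>
     (\<exists>x\<in>X. \<exists>y\<in>X. \<exists>u\<in>U. \<exists>v\<in>U. pairs_alternate cs x y u v)"

definition conflict_rel :: "'a set \<Rightarrow> 'a set set \<Rightarrow> 'a list \<Rightarrow>
    (('a set \<times> 'a set set) \<times> ('a set \<times> 'a set set)) set" where
  "conflict_rel V E cs = {(X, Y). X \<in> bridges V E cs \<and> Y \<in> bridges V E cs \<and> X \<noteq> Y \<and>
     sets_alternate cs (att cs X) (att cs Y)}"

definition conflict_component :: "'a set \<Rightarrow> 'a set set \<Rightarrow> 'a list \<Rightarrow>
    ('a set \<times> 'a set set) set \<Rightarrow> bool" where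
  "conflict_component V E cs K \<longleftrightarrow>
     (\<exists>X0 \<in> bridges V E cs. K = {Y. (X0, Y) \<in> (conflict_rel V E cs)\<^sup>*})"

end

theory Submission
  imports Defs
begin


lemma inside_arc_nth:
  assumes "distinct zs" "i < length zs" "j < length zs" "k < length zs"
  shows "inside_arc zs (zs!i) (zs!j) (zs!k) \<longleftrightarrow> (min i j < k \<and> k < max i j)"
proof
  assume "inside_arc zs (zs!i) (zs!j) (zs!k)"
  then obtain i' j' k' where h: "i' < length zs" "j' < length zs" "k' < length zs"
    "zs ! i' = zs!i" "zs!j' = zs!j" "zs!k' = zs!k" "min i' j' < k'" "k' < max i' j'"
    unfolding inside_arc_def by blast
  then have "i' = i" "j' = j" "k' = k" using assms nth_eq_iff_index_eq by metis+
  then show "min i j < k \<and> k < max i j" using h by simp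
next
  assume "min i j < k \<and> k < max i j"
  then show "inside_arc zs (zs!i) (zs!j) (zs!k)" unfolding inside_arc_def using assms by blast
qed

lemma alt_top: "(a::nat) < t \<Longrightarrow> c < t \<Longrightarrow> d < t \<Longrightarrow> a \<noteq> c \<Longrightarrow> a \<noteq> d \<Longrightarrow>
   ((min t a < c \<and> c < max t a) \<noteq> (min t a < d \<and> d < max t a)) =
   ((c < a) \<noteq> (d < a))"
  by (auto simp: min_def max_def)
lemma alt_bot: "0 < a \<Longrightarrow> 0 < c \<Longrightarrow> 0 < d \<Longrightarrow>
   ((min (0::nat) a < c \<and> c < max 0 a) \<noteq> (min 0 a < d \<and> d < max 0 a)) =
   ((c < a) \<noteq> (d < a))"
  by (auto simp: min_def max_def)
lemma alt_ctop: "(a::nat) < t \<Longrightarrow> b < t \<Longrightarrow>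
   ((min a b < t \<and> t < max a b) \<noteq> (min a b < d \<and> d < max a b)) =
   (min a b < d \<and> d < max a b)"
  by (auto simp: min_def max_def)
lemma alt_cbot: "0 < (a::nat) \<Longrightarrow> 0 < b \<Longrightarrow>
   ((min a b < 0 \<and> 0 < max a b) \<noteq> (min a b < d \<and> d < max a b)) =
   (min a b < d \<and> d < max a b)"
  by (auto simp: min_def max_def)

lemma arith_rot:
  fixes i1 i2 i3 i4 n :: nat
  assumes "i1 < n" "i2 < n" "i3 < n" "i4 < n" "distinct [i1,i2,i3,i4]"
  defines "g \<equiv> (\<lambda>i. if i = 0 then n - 1 else i - 1)"
  shows "(((min i1 i2 < i3 \<and> i3 < max i1 i2) \<noteq> (min i1 i2 < i4 \<and> i4 < max i1 i2))) =
    (((min (g i1) (g i2) < g i3 \<and> g i3 < max (g i1) (g i2)) \<noteq> (min (g i1) (g i2) < g i4 \<and> g i4 < max (g i1) (g i2))))"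
proof -
  have c: "(i1 = 0 \<or> i2 = 0 \<or> i3 = 0 \<or> i4 = 0) \<or> (i1 \<noteq> 0 \<and> i2 \<noteq> 0 \<and> i3 \<noteq> 0 \<and> i4 \<noteq> 0)" by blast
  have gs: "\<And>i. i \<noteq> 0 \<Longrightarrow> g i = i - 1" "g 0 = n - 1" unfolding g_def by auto
  show ?thesis using c
  proof (elim disjE)
    assume h: "i1 = 0"
    have "?thesis = (((0 < i3 \<and> i3 < i2) \<noteq> (0 < i4 \<and> i4 < i2)) =
      ((min (n-1) (i2-1) < i3-1 \<and> i3-1 < max (n-1) (i2-1)) \<noteq> (min (n-1) (i2-1) < i4-1 \<and> i4-1 < max (n-1) (i2-1))))"
      using h assms(5) gs by simp
    moreover have "\<dots>" using assms h by (subst alt_top) auto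
    ultimately show ?thesis by blast
  next
    assume h: "i2 = 0"
    have "?thesis = (((0 < i3 \<and> i3 < i1) \<noteq> (0 < i4 \<and> i4 < i1)) =
      ((min (n-1) (i1-1) < i3-1 \<and> i3-1 < max (n-1) (i1-1)) \<noteq> (min (n-1) (i1-1) < i4-1 \<and> i4-1 < max (n-1) (i1-1))))"
      using h assms(5) gs by (simp add: min.commute max.commute)
    moreover have "\<dots>" using assms h by (subst alt_top) auto
    ultimately show ?thesis by blast
  next
    assume h: "i3 = 0"
    have "?thesis = ((min i1 i2 < i4 \<and> i4 < max i1 i2) =
      ((min (i1-1) (i2-1) < n-1 \<and> n-1 < max (i1-1) (i2-1)) \<noteq> (min (i1-1) (i2-1) < i4-1 \<and> i4-1 < max (i1-1) (i2-1))))"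
      using h assms(5) gs by (auto simp: min_def max_def)
    moreover have "\<dots>" using assms h by (subst alt_ctop) (auto simp: min_def max_def)
    ultimately show ?thesis by blast
  next
    assume h: "i4 = 0"
    have "?thesis = ((min i1 i2 < i3 \<and> i3 < max i1 i2) =
      ((min (i1-1) (i2-1) < n-1 \<and> n-1 < max (i1-1) (i2-1)) \<noteq> (min (i1-1) (i2-1) < i3-1 \<and> i3-1 < max (i1-1) (i2-1))))"
      using h assms(5) gs by (auto simp: min_def max_def)
    moreover have "\<dots>" using assms h by (subst alt_ctop) (auto simp: min_def max_def)
    ultimately show ?thesis by blast
  next
    assume h: "i1 \<noteq> 0 \<and> i2 \<noteq> 0 \<and> i3 \<noteq> 0 \<and> i4 \<noteq> 0"
    then obtain j1 j2 j3 j4 where j: "i1 = Suc j1" "i2 = Suc j2" "i3 = Suc j3" "i4 = Suc j4"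
      by (metis not0_implies_Suc)
    show ?thesis using gs h unfolding j by simp
  qed
qed

lemma pairs_alternate_rotate1:
  assumes d: "distinct cs"
  shows "pairs_alternate (rotate1 cs) x y u v = pairs_alternate cs x y u v"
proof (cases "distinct [x, y, u, v] \<and> {x, y, u, v} \<subseteq> set cs")
  case False
  have "set (rotate1 cs) = set cs" by simp
  then show ?thesis unfolding pairs_alternate_def using False by metis
next
  case True
  let ?n = "length cs"
  define g where "g = (\<lambda>i. if i = 0 then ?n - 1 else i - 1)"
  have g: "\<And>i. i < ?n \<Longrightarrow> g i < ?n \<and> rotate1 cs ! g i = cs ! i"
  proof -
    fix i assume i: "i < ?n"
    then have "g i < ?n" unfolding g_def by auto
    moreover have "Suc (g i) mod ?n = i" using i unfolding g_def by auto
    ultimately show "g i < ?n \<and> rotate1 cs ! g i = cs ! i" using nth_rotate1[of "g i" cs] by simp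
  qed
  from True obtain i1 i2 i3 i4 where ix: "i1 < ?n" "i2 < ?n" "i3 < ?n" "i4 < ?n"
    "x = cs!i1" "y = cs!i2" "u = cs!i3" "v = cs!i4"
    by (auto simp: in_set_conv_nth)
  have di: "distinct [i1,i2,i3,i4]" using True ix by auto
  have d1: "distinct (rotate1 cs)" "length (rotate1 cs) = ?n" using d by auto
  have "pairs_alternate cs x y u v \<longleftrightarrow>
     ((min i1 i2 < i3 \<and> i3 < max i1 i2) \<noteq> (min i1 i2 < i4 \<and> i4 < max i1 i2))"
    unfolding pairs_alternate_def using True ix inside_arc_nth[OF d] by simp
  moreover have "pairs_alternate (rotate1 cs) x y u v \<longleftrightarrow>
     ((min (g i1) (g i2) < g i3 \<and> g i3 < max (g i1) (g i2)) \<noteq> (min (g i1) (g i2) < g i4 \<and> g i4 < max (g i1) (g i2)))"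
  proof -
    have e: "x = rotate1 cs ! g i1" "y = rotate1 cs ! g i2" "u = rotate1 cs ! g i3" "v = rotate1 cs ! g i4"
      using g ix by auto
    have gl: "g i1 < ?n" "g i2 < ?n" "g i3 < ?n" "g i4 < ?n" using g ix by auto
    have "inside_arc (rotate1 cs) x y u = (min (g i1) (g i2) < g i3 \<and> g i3 < max (g i1) (g i2))"
      unfolding e using inside_arc_nth[OF d1(1)] gl d1(2) by simp
    moreover have "inside_arc (rotate1 cs) x y v = (min (g i1) (g i2) < g i4 \<and> g i4 < max (g i1) (g i2))"
      unfolding e using inside_arc_nth[OF d1(1)] gl d1(2) by simp
    moreover have "distinct [x, y, u, v] \<and> {x, y, u, v} \<subseteq> set (rotate1 cs)" using True by simp
    ultimately show ?thesis unfolding pairs_alternate_def by simp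
  qed
  ultimately show ?thesis using arith_rot[OF ix(1-4) di] unfolding g_def by simp
qed

lemma pairs_alternate_rotate:
  "distinct cs \<Longrightarrow> pairs_alternate (rotate p cs) = pairs_alternate cs"
  by (induction p) (auto simp: pairs_alternate_rotate1 fun_eq_iff)

lemma cycle_edges_rotate1: "cycle_edges (rotate1 cs) = cycle_edges cs"
proof (cases "cs = []")
  case True then show ?thesis by simp
next
  case False
  let ?n = "length cs"
  have n: "?n > 0" using False by simp
  show ?thesis
  proof
    show "cycle_edges (rotate1 cs) \<subseteq> cycle_edges cs"
    proof
      fix e assume "e \<in> cycle_edges (rotate1 cs)"
      then obtain i where i: "i < ?n" "e = {rotate1 cs ! i, rotate1 cs ! (Suc i mod ?n)}"
        unfolding cycle_edges_def by auto
      have "rotate1 cs ! i = cs ! (Suc i mod ?n)" using i(1) by (rule nth_rotate1)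
      moreover have "rotate1 cs ! (Suc i mod ?n) = cs ! (Suc (Suc i mod ?n) mod ?n)"
        by (rule nth_rotate1) (use n in simp)
      ultimately show "e \<in> cycle_edges cs" unfolding cycle_edges_def using i n by auto
    qed
  next
    show "cycle_edges cs \<subseteq> cycle_edges (rotate1 cs)"
    proof
      fix e assume "e \<in> cycle_edges cs"
      then obtain j where j: "j < ?n" "e = {cs ! j, cs ! (Suc j mod ?n)}"
        unfolding cycle_edges_def by auto
      define i where "i = (if j = 0 then ?n - 1 else j - 1)"
      have i: "i < ?n" "Suc i mod ?n = j" using j n unfolding i_def by auto
      have "rotate1 cs ! i = cs ! j" using nth_rotate1[OF i(1)] i(2) by simp
      moreover have "rotate1 cs ! (Suc i mod ?n) = cs ! (Suc j mod ?n)"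
        using nth_rotate1[of "Suc i mod ?n" cs] n i(2) j(1) by simp
      ultimately show "e \<in> cycle_edges (rotate1 cs)" unfolding cycle_edges_def using i j
        by (auto intro!: exI[of _ i])
    qed
  qed
qed

lemma cycle_edges_rotate: "cycle_edges (rotate p cs) = cycle_edges cs"
  by (induction p) (auto simp: cycle_edges_rotate1)

lemma bridges_rotate: "bridges V E (rotate p cs) = bridges V E cs"
  unfolding bridges_def by (simp add: cycle_edges_rotate)

lemma att_rotate: "att (rotate p cs) = att cs"
  unfolding att_def by (simp add: fun_eq_iff)

lemma conflict_rel_rotate: "distinct cs \<Longrightarrow> conflict_rel V E (rotate p cs) = conflict_rel V E cs"
  unfolding conflict_rel_def sets_alternate_def
  by (simp add: bridges_rotate att_rotate pairs_alternate_rotate)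

lemma conflict_component_rotate:
  "distinct cs \<Longrightarrow> conflict_component V E (rotate p cs) K = conflict_component V E cs K"
  unfolding conflict_component_def by (simp add: bridges_rotate conflict_rel_rotate)



lemma K_closed:
  assumes "K = {Y. (X0, Y) \<in> (conflict_rel V E ds)\<^sup>*}" "X \<in> K" "(X, Y) \<in> conflict_rel V E ds"
  shows "Y \<in> K"
  using assms by (auto intro: rtrancl_into_rtrancl)

lemma K_sub:
  assumes "K = {Y. (X0, Y) \<in> (conflict_rel V E ds)\<^sup>*}" "X0 \<in> bridges V E ds" "X \<in> K"
  shows "X \<in> bridges V E ds"
proof -
  have "(X0, X) \<in> (conflict_rel V E ds)\<^sup>*" using assms by auto
  then show ?thesis
  proof (cases rule: rtranclE)
    case base then show ?thesis using assms by simp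
  next
    case (step Z) then show ?thesis unfolding conflict_rel_def by auto
  qed
qed

lemma key:
  assumes dist: "distinct ds"
   and K: "K = {Y. (X0, Y) \<in> (conflict_rel V E ds)\<^sup>*}"
   and X0: "X0 \<in> bridges V E ds"
   and A: "A = (\<Union>X\<in>K. att ds X)"
   and pb: "pb < pa" "pa < length ds" "ds!pb \<in> A" "ds!pa \<in> A"
   and rng: "\<forall>i<length ds. ds!i \<in> A \<longrightarrow> pb \<le> i \<and> i \<le> pa"
   and Y: "Y \<in> bridges V E ds"
   and q: "q < length ds" "q < pb \<or> pa < q" "ds!q \<in> att ds Y"
   and r: "pb < r" "r < pa" "ds!r \<in> att ds Y"
  shows False
proof -
  let ?n = "length ds"
  let ?R = "conflict_rel V E ds"
  have X0K: "X0 \<in> K" using K by simp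
  have YK: "Y \<notin> K"
  proof
    assume "Y \<in> K"
    then have "ds!q \<in> A" using A q by auto
    then show False using rng q by auto
  qed
  have attA: "\<And>X i. X \<in> K \<Longrightarrow> i < ?n \<Longrightarrow> ds!i \<in> att ds X \<Longrightarrow> pb \<le> i \<and> i \<le> pa"
    using A rng by blast
  have attS: "\<And>X z. z \<in> att ds X \<Longrightarrow> \<exists>i<?n. z = ds!i"
    unfolding att_def by (auto simp: in_set_conv_nth)
  define le where "le X \<longleftrightarrow> (\<forall>i<?n. ds!i \<in> att ds X \<longrightarrow> i \<le> r)" for X
  define ge where "ge X \<longleftrightarrow> (\<forall>i<?n. ds!i \<in> att ds X \<longrightarrow> r \<le> i)" for X
  have C1: "le X \<or> ge X" if XK: "X \<in> K" for X
  proof (rule ccontr)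
    assume "\<not> (le X \<or> ge X)"
    then obtain i j where ij: "i < ?n" "ds!i \<in> att ds X" "r < i" "j < ?n" "ds!j \<in> att ds X" "j < r"
      unfolding le_def ge_def by (auto simp: not_le)
    have ri: "pb \<le> j" "i \<le> pa" using attA[OF XK ij(1,2)] attA[OF XK ij(4,5)] by auto
    have "pairs_alternate ds (ds!j) (ds!i) (ds!q) (ds!r)"
    proof -
      have "distinct [ds!j, ds!i, ds!q, ds!r]" using ij ri q r pb dist
        by (auto simp: nth_eq_iff_index_eq)
      moreover have "{ds!j, ds!i, ds!q, ds!r} \<subseteq> set ds" using ij q r pb by auto
      moreover have "\<not> inside_arc ds (ds!j) (ds!i) (ds!q)"
        using inside_arc_nth[OF dist, of j i q] ij q ri by auto
      moreover have "inside_arc ds (ds!j) (ds!i) (ds!r)"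
        using inside_arc_nth[OF dist, of j i r] ij r pb by auto
      ultimately show ?thesis unfolding pairs_alternate_def by auto
    qed
    then have "sets_alternate ds (att ds X) (att ds Y)"
      unfolding sets_alternate_def using ij q r by blast
    moreover have "X \<noteq> Y" using XK YK by auto
    moreover have "X \<in> bridges V E ds" using K_sub[OF K X0 XK] .
    ultimately have "(X, Y) \<in> ?R" using Y unfolding conflict_rel_def by auto
    then have "Y \<in> K" using K_closed[OF K XK] by blast
    then show False using YK by simp
  qed
  have noalt: "\<not> sets_alternate ds (att ds P) (att ds Q)"
    if h: "(le P \<and> ge Q) \<or> (ge P \<and> le Q)" for P Q
  proof
    assume "sets_alternate ds (att ds P) (att ds Q)"
    then obtain x y u w where m: "x \<in> att ds P" "y \<in> att ds P" "u \<in> att ds Q" "w \<in> att ds Q"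
      and pa: "pairs_alternate ds x y u w" unfolding sets_alternate_def by blast
    obtain i1 where i1: "i1 < ?n" "x = ds!i1" using attS[OF m(1)] by blast
    obtain i2 where i2: "i2 < ?n" "y = ds!i2" using attS[OF m(2)] by blast
    obtain i3 where i3: "i3 < ?n" "u = ds!i3" using attS[OF m(3)] by blast
    obtain i4 where i4: "i4 < ?n" "w = ds!i4" using attS[OF m(4)] by blast
    have "inside_arc ds x y u = (min i1 i2 < i3 \<and> i3 < max i1 i2)"
      using inside_arc_nth[OF dist i1(1) i2(1) i3(1)] i1 i2 i3 by simp
    moreover have "inside_arc ds x y w = (min i1 i2 < i4 \<and> i4 < max i1 i2)"
      using inside_arc_nth[OF dist i1(1) i2(1) i4(1)] i1 i2 i4 by simp
    moreover have "i1 \<le> r \<and> i2 \<le> r \<and> r \<le> i3 \<and> r \<le> i4 \<or> r \<le> i1 \<and> r \<le> i2 \<and> i3 \<le> r \<and> i4 \<le> r"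
      using h m i1 i2 i3 i4 unfolding le_def ge_def by blast
    ultimately have "inside_arc ds x y u = inside_arc ds x y w" by auto
    then show False using pa unfolding pairs_alternate_def by simp
  qed
  have C2: "(le X0 \<longrightarrow> le Z) \<and> (ge X0 \<longrightarrow> ge Z)" if "(X0, Z) \<in> ?R\<^sup>*" for Z
    using that
  proof (induction rule: rtrancl_induct)
    case base then show ?case by simp
  next
    case (step Z Z')
    have Z'K: "Z' \<in> K" using K step by (auto intro: rtrancl_into_rtrancl)
    have sa: "sets_alternate ds (att ds Z) (att ds Z')" using step(2) unfolding conflict_rel_def by auto
    show ?case
    proof (intro conjI impI)
      assume "le X0"
      then have "le Z" using step by simp
      show "le Z'"
      proof (rule ccontr)
        assume "\<not> le Z'"
        then have "ge Z'" using C1[OF Z'K] by simp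
        then show False using noalt[of Z Z'] sa \<open>le Z\<close> by simp
      qed
    next
      assume "ge X0"
      then have "ge Z" using step by simp
      show "ge Z'"
      proof (rule ccontr)
        assume "\<not> ge Z'"
        then have "le Z'" using C1[OF Z'K] by simp
        then show False using noalt[of Z Z'] sa \<open>ge Z\<close> by simp
      qed
    qed
  qed
  obtain X1 where X1: "X1 \<in> K" "ds!pa \<in> att ds X1" using pb A by auto
  obtain X2 where X2: "X2 \<in> K" "ds!pb \<in> att ds X2" using pb A by auto
  have "\<not> le X1" using X1 pb r unfolding le_def by auto
  moreover have "\<not> ge X2"
  proof
    assume "ge X2"
    then have "r \<le> pb" using X2(2) pb(1,2) unfolding ge_def by simp
    then show False using r by simp
  qed
  moreover have "(X0, X1) \<in> ?R\<^sup>*" "(X0, X2) \<in> ?R\<^sup>*" using X1 X2 K by auto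
  ultimately show False using C1[OF X0K] C2 by blast
qed



lemma edge_V:
  assumes "simple_graph V E" "{x, y} \<in> E"
  shows "x \<in> V" "y \<in> V" "x \<noteq> y"
proof -
  obtain u w where "{x, y} = {u, w}" "u \<noteq> w" "u \<in> V" "w \<in> V"
    using assms unfolding simple_graph_def by blast
  then show "x \<in> V" "y \<in> V" "x \<noteq> y" by (auto simp: doubleton_eq_iff)
qed

lemma closure_lemma:
  assumes "connected_set E W" "z \<in> W" "z \<in> Z" "\<forall>x\<in>Z. \<forall>y\<in>W. {x, y} \<in> E \<longrightarrow> y \<in> Z"
  shows "W \<subseteq> Z"
proof
  fix w assume "w \<in> W"
  then have "(z, w) \<in> (adj_in E W)\<^sup>*" using assms(1,2) unfolding connected_set_def by blast
  then show "w \<in> Z"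
  proof (induction rule: rtrancl_induct)
    case base then show ?case using assms(3) .
  next
    case (step y w)
    then show ?case using assms(4) unfolding adj_in_def by auto
  qed
qed

lemma comp_step:
  assumes "component_of E U H" "h \<in> H" "y \<in> U" "{h, y} \<in> E"
  shows "y \<in> H"
proof -
  obtain v where v: "v \<in> U" "H = {u \<in> U. (v, u) \<in> (adj_in E U)\<^sup>*}"
    using assms(1) unfolding component_of_def by blast
  have "(h, y) \<in> adj_in E U" using assms v unfolding adj_in_def by auto
  then show ?thesis using assms v by (auto intro: rtrancl_into_rtrancl)
qed

lemma adj_sym: "sym (adj_in E U)"
  unfolding sym_def adj_in_def by (auto simp: insert_commute)

lemma comp_overlap:
  assumes "component_of E U H" "component_of E U H'" "h \<in> H" "h \<in> H'" "h' \<in> H'"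
  shows "h' \<in> H"
proof -
  obtain v where v: "v \<in> U" "H = {u \<in> U. (v, u) \<in> (adj_in E U)\<^sup>*}"
    using assms(1) unfolding component_of_def by blast
  obtain v' where v': "v' \<in> U" "H' = {u \<in> U. (v', u) \<in> (adj_in E U)\<^sup>*}"
    using assms(2) unfolding component_of_def by blast
  have s: "sym ((adj_in E U)\<^sup>*)" by (rule sym_rtrancl[OF adj_sym])
  have "(v, h) \<in> (adj_in E U)\<^sup>*" "(v', h) \<in> (adj_in E U)\<^sup>*" "(v', h') \<in> (adj_in E U)\<^sup>*"
    using assms v v' by auto
  then have "(v, h') \<in> (adj_in E U)\<^sup>*" using s by (meson rtrancl_trans symD)
  then show ?thesis using v v' assms by auto
qed

lemma comp_nonempty:
  assumes "component_of E U H" obtains h where "h \<in> H" "H \<subseteq> U"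
  using assms unfolding component_of_def by blast

lemma main_case:
  assumes kc: "k_connected 3 V E" and dist: "distinct ds" and sub: "set ds \<subseteq> V"
  and K: "K = {Y. (X0, Y) \<in> (conflict_rel V E ds)\<^sup>*}" and X0: "X0 \<in> bridges V E ds"
  and A: "A = (\<Union>X\<in>K. att ds X)"
  and p: "0 < pb" "pb < pa" "pa < length ds" "ds!pb \<in> A" "ds!pa \<in> A"
  and rng: "\<forall>i<length ds. ds!i \<in> A \<longrightarrow> pb \<le> i \<and> i \<le> pa"
  shows False
proof -
  let ?n = "length ds"
  have sg: "simple_graph V E" using kc unfolding k_connected_def by simp
  have ne: "ds \<noteq> []" "0 < ?n" using p by auto
  note key' = key[OF dist K X0 A p(2-5) rng]
  define W where "W = V - {ds!pb, ds!pa}"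
  have conn: "connected_set E W"
  proof -
    have "card {ds!pb, ds!pa} < 3" by (simp add: card_insert_if)
    moreover have "{ds!pb, ds!pa} \<subseteq> V" using sub p by auto
    ultimately show ?thesis using kc unfolding k_connected_def W_def by blast
  qed
  define CH where "CH = {H. component_of E (V - set ds) H \<and>
      (\<exists>h\<in>H. \<exists>q<?n. (q < pb \<or> pa < q) \<and> {h, ds!q} \<in> E)}"
  define Z where "Z = {ds!q | q. q < ?n \<and> (q < pb \<or> pa < q)} \<union> \<Union> CH"
  have dsi: "\<And>i j. i < ?n \<Longrightarrow> j < ?n \<Longrightarrow> ds!i = ds!j \<longleftrightarrow> i = j"
    using dist by (simp add: nth_eq_iff_index_eq)
  have closedZ: "\<forall>x\<in>Z. \<forall>y\<in>W. {x, y} \<in> E \<longrightarrow> y \<in> Z"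
  proof (intro ballI impI)
    fix x y assume xZ: "x \<in> Z" and yW: "y \<in> W" and xy: "{x, y} \<in> E"
    have yV: "y \<in> V" using yW W_def by simp
    show "y \<in> Z"
    proof (cases "y \<in> set ds")
      case True
      then obtain r where r: "r < ?n" "y = ds!r" by (auto simp: in_set_conv_nth)
      show ?thesis
      proof (cases "r < pb \<or> pa < r")
        case True then show ?thesis using r Z_def by auto
      next
        case False
        have "r \<noteq> pb" "r \<noteq> pa" using yW r W_def by auto
        then have rr: "pb < r" "r < pa" using False by auto
        from xZ[unfolded Z_def] show ?thesis
        proof (elim UnE)
          assume "x \<in> {ds!q | q. q < ?n \<and> (q < pb \<or> pa < q)}"
          then obtain q where q: "q < ?n" "q < pb \<or> pa < q" "x = ds!q" by auto
          have notce: "{x, y} \<notin> cycle_edges ds"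
          proof
            assume "{x, y} \<in> cycle_edges ds"
            then obtain i where i: "i < ?n" "{x, y} = {ds!i, ds!(Suc i mod ?n)}"
              unfolding cycle_edges_def by auto
            have si: "Suc i mod ?n < ?n" by (rule mod_less_divisor) (use i(1) in linarith)
            have "(q = i \<and> r = Suc i mod ?n) \<or> (q = Suc i mod ?n \<and> r = i)"
              using i(2) q r dsi[OF q(1) i(1)] dsi[OF q(1) si] dsi[OF r(1) i(1)] dsi[OF r(1) si]
              by (auto simp: doubleton_eq_iff)
            then show False
            proof
              assume h: "q = i \<and> r = Suc i mod ?n"
              show False
              proof (cases "Suc i < ?n")
                case True then show False using h q rr by auto
              next
                case False then have "Suc i = ?n" using i by simp
                then show False using h rr p by auto
              qed
            next
              assume h: "q = Suc i mod ?n \<and> r = i"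
              then have "q = Suc r" using rr p by auto
              then show False using q rr by auto
            qed
          qed
          have "{x, y} \<subseteq> set ds" using q r by auto
          then have Yb: "({x, y}, {{x, y}}) \<in> bridges V E ds"
            unfolding bridges_def using xy notce by blast
          have "ds!q \<in> att ds ({x, y}, {{x, y}})" "ds!r \<in> att ds ({x, y}, {{x, y}})"
            unfolding att_def using q r by auto
          then show ?thesis using key'[OF Yb q(1,2)] rr by blast
        next
          assume "x \<in> \<Union> CH"
          then obtain H h q where H: "component_of E (V - set ds) H" "x \<in> H" "h \<in> H"
            "q < ?n" "q < pb \<or> pa < q" "{h, ds!q} \<in> E" unfolding CH_def by blast
          define Y where "Y = (H \<union> {v \<in> set ds. \<exists>u\<in>H. {u, v} \<in> E}, {e \<in> E. e \<inter> H \<noteq> {}})"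
          have Yb: "Y \<in> bridges V E ds" unfolding bridges_def Y_def using H(1) by blast
          have "ds!q \<in> att ds Y" unfolding att_def Y_def using H by auto
          moreover have "ds!r \<in> att ds Y" unfolding att_def Y_def using H xy r by auto
          ultimately show ?thesis using key'[OF Yb H(4,5)] rr by blast
        qed
      qed
    next
      case False
      then have yU: "y \<in> V - set ds" using yV by simp
      from xZ[unfolded Z_def] show ?thesis
      proof (elim UnE)
        assume "x \<in> {ds!q | q. q < ?n \<and> (q < pb \<or> pa < q)}"
        then obtain q where q: "q < ?n" "q < pb \<or> pa < q" "x = ds!q" by auto
        define H where "H = {u \<in> V - set ds. (y, u) \<in> (adj_in E (V - set ds))\<^sup>*}"
        have Hc: "component_of E (V - set ds) H" unfolding component_of_def H_def using yU by blast
        have "y \<in> H" unfolding H_def using yU by simp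
        moreover have "{y, ds!q} \<in> E" using xy q by (simp add: insert_commute)
        ultimately have "H \<in> CH" unfolding CH_def using Hc q by blast
        then show ?thesis using \<open>y \<in> H\<close> Z_def by auto
      next
        assume "x \<in> \<Union> CH"
        then obtain H where H: "H \<in> CH" "x \<in> H" by blast
        then have "y \<in> H" using comp_step[OF _ H(2) yU xy] unfolding CH_def by blast
        then show ?thesis using H Z_def by auto
      qed
    qed
  qed
  have d0: "ds!0 \<in> W" using p ne nth_mem[OF ne(2)] sub dsi[of 0 pb] dsi[of 0 pa] W_def by auto
  have "ds!0 \<in> Z" using p Z_def by auto
  then have WZ: "W \<subseteq> Z" using closure_lemma[OF conn d0 _ closedZ] by blast
  have CHU: "\<Union> CH \<inter> set ds = {}" unfolding CH_def component_of_def by auto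
  show False
  proof (cases "Suc pb < pa")
    case True
    have "ds!(Suc pb) \<in> W" using True p sub dsi[of "Suc pb" pb] dsi[of "Suc pb" pa] W_def by auto
    moreover have "ds!(Suc pb) \<notin> Z"
    proof
      assume "ds!(Suc pb) \<in> Z"
      moreover have "ds!(Suc pb) \<in> set ds" using True p by auto
      ultimately obtain q where "q < ?n" "q < pb \<or> pa < q" "ds!(Suc pb) = ds!q"
        using CHU Z_def by auto
      then show False using dsi[of "Suc pb" q] True p by auto
    qed
    ultimately show False using WZ by blast
  next
    case False
    then have pa1: "pa = Suc pb" using p by simp
    have X0K: "X0 \<in> K" using K by simp
    have attX0: "att ds X0 \<subseteq> A" using A X0K by auto
    show False using X0 unfolding bridges_def
    proof (elim UnE CollectE exE conjE)
      fix e assume e: "X0 = (e, {e})" "e \<in> E" "e \<notin> cycle_edges ds" "e \<subseteq> set ds"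
      obtain u w where uw: "e = {u, w}" using e(2) sg unfolding simple_graph_def by blast
      have uwne: "u \<noteq> w" using edge_V[OF sg] e(2) uw by blast
      have "att ds X0 = e" unfolding att_def e using e(4) by auto
      then have eA: "u \<in> A" "w \<in> A" using attX0 uw by auto
      obtain iu where iu: "iu < ?n" "u = ds!iu" using e(4) uw by (auto simp: in_set_conv_nth)
      obtain iw where iw: "iw < ?n" "w = ds!iw" using e(4) uw by (auto simp: in_set_conv_nth)
      have "iu = pb \<or> iu = pa" "iw = pb \<or> iw = pa" using rng eA iu iw pa1 by fastforce+
      moreover have "iu \<noteq> iw" using uwne iu iw by auto
      ultimately have "e = {ds!pb, ds!(Suc pb mod ?n)}" using uw iu iw pa1 p by auto
      moreover have "pb < ?n" using p by simp
      ultimately have "e \<in> cycle_edges ds" unfolding cycle_edges_def by blast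
      then show False using e(3) by simp
    next
      fix H assume H: "X0 = (H \<union> {v \<in> set ds. \<exists>u\<in>H. {u, v} \<in> E}, {e \<in> E. e \<inter> H \<noteq> {}})"
        "component_of E (V - set ds) H"
      obtain h0 where h0: "h0 \<in> H" "H \<subseteq> V - set ds" using comp_nonempty[OF H(2)] by blast
      have "h0 \<in> W" using h0 p sub W_def by auto
      then have "h0 \<in> Z" using WZ by blast
      moreover have "h0 \<notin> set ds" using h0 by auto
      ultimately have "h0 \<in> \<Union> CH" using Z_def by auto
      then obtain H' h q where H': "component_of E (V - set ds) H'" "h0 \<in> H'" "h \<in> H'"
        "q < ?n" "q < pb \<or> pa < q" "{h, ds!q} \<in> E" unfolding CH_def by blast
      have "h \<in> H" using comp_overlap[OF H(2) H'(1) h0(1) H'(2) H'(3)] .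
      then have "ds!q \<in> att ds X0" unfolding att_def H(1) using H' by auto
      then have "ds!q \<in> A" using attX0 by auto
      then show False using rng H' by auto
    qed
  qed
qed



lemma core:
  assumes kc: "k_connected 3 V E" and dist: "distinct ds" and sub: "set ds \<subseteq> V"
    and cc: "conflict_component V E ds K"
    and v: "ds!0 \<notin> (\<Union>X\<in>K. att ds X)" and ne: "ds \<noteq> []"
  shows False
proof -
  let ?n = "length ds"
  define A where "A = (\<Union>X\<in>K. att ds X)"
  obtain X0 where X0: "X0 \<in> bridges V E ds" and K: "K = {Y. (X0, Y) \<in> (conflict_rel V E ds)\<^sup>*}"
    using cc unfolding conflict_component_def by blast
  have sg: "simple_graph V E" using kc unfolding k_connected_def by simp
  have AS: "A \<subseteq> set ds" unfolding A_def att_def by auto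
  have X0K: "X0 \<in> K" using K by simp
  have attX0: "att ds X0 \<subseteq> A" using A_def X0K by auto
  have v': "ds!0 \<notin> A" using v A_def by simp
  show False
  proof (cases "\<exists>x\<in>A. \<exists>y\<in>A. x \<noteq> y")
    case True
    then obtain x y where xy: "x \<in> A" "y \<in> A" "x \<noteq> y" by blast
    define PA where "PA = {i. i < ?n \<and> ds!i \<in> A}"
    have fin: "finite PA" unfolding PA_def by simp
    have "x \<in> set ds" "y \<in> set ds" using xy AS by auto
    then obtain ix iy where ix: "ix < ?n" "x = ds!ix" and iy: "iy < ?n" "y = ds!iy"
      by (metis in_set_conv_nth)
    have ixP: "ix \<in> PA" "iy \<in> PA" using ix iy xy PA_def by auto
    have ixy: "ix \<noteq> iy" using ix iy xy by auto
    define pb where "pb = Min PA"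
    define pa where "pa = Max PA"
    have PAne: "PA \<noteq> {}" using ixP by auto
    have pbP: "pb \<in> PA" "pa \<in> PA" unfolding pb_def pa_def using Min_in[OF fin PAne] Max_in[OF fin PAne] by auto
    have rng: "\<forall>i<?n. ds!i \<in> A \<longrightarrow> pb \<le> i \<and> i \<le> pa"
      unfolding pb_def pa_def using fin PA_def by auto
    have "pb \<le> ix" "pb \<le> iy" "ix \<le> pa" "iy \<le> pa" using rng ix iy xy by auto
    then have lt: "pb < pa" using ixy by auto
    have p0: "0 < pb" using pbP v' PA_def by (cases pb) auto
    show False
      using main_case[OF kc dist sub K X0 A_def p0 lt _ _ _ rng] pbP PA_def by auto
  next
    case False
    then have cA: "card A < 3" using card_le_Suc0_iff_eq[of A] AS finite_subset by fastforce
    have AV: "A \<subseteq> V" using AS sub by auto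
    have conn: "connected_set E (V - A)" using kc cA AV unfolding k_connected_def by blast
    show False using X0 unfolding bridges_def
    proof (elim UnE CollectE exE conjE)
      fix e assume e: "X0 = (e, {e})" "e \<in> E" "e \<notin> cycle_edges ds" "e \<subseteq> set ds"
      obtain u w where uw: "e = {u, w}" using e(2) sg unfolding simple_graph_def by blast
      have uwne: "u \<noteq> w" using edge_V[OF sg] e(2) uw by blast
      have "att ds X0 = e" unfolding att_def e using e(4) by auto
      then have "u \<in> A" "w \<in> A" using attX0 uw by auto
      then show False using False uwne by blast
    next
      fix H assume H: "X0 = (H \<union> {v \<in> set ds. \<exists>u\<in>H. {u, v} \<in> E}, {e \<in> E. e \<inter> H \<noteq> {}})"
        "component_of E (V - set ds) H"
      obtain h0 where h0: "h0 \<in> H" "H \<subseteq> V - set ds" using comp_nonempty[OF H(2)] by blast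
      have closed: "\<forall>x\<in>H. \<forall>y\<in>V - A. {x, y} \<in> E \<longrightarrow> y \<in> H"
      proof (intro ballI impI)
        fix x y assume x: "x \<in> H" and y: "y \<in> V - A" and xy: "{x, y} \<in> E"
        show "y \<in> H"
        proof (cases "y \<in> set ds")
          case True
          then have "y \<in> att ds X0" unfolding att_def H(1) using x xy by auto
          then show ?thesis using attX0 y by auto
        next
          case False
          then show ?thesis using comp_step[OF H(2) x _ xy] y by auto
        qed
      qed
      have "h0 \<in> V - A" using h0 AS by auto
      then have "V - A \<subseteq> H" using closure_lemma[OF conn _ h0(1) closed] by blast
      moreover have "ds!0 \<in> V - A" using v' sub ne nth_mem[of 0 ds] by auto
      moreover have "ds!0 \<in> set ds" using ne by simp
      ultimately show False using h0 by auto
    qed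
  qed
qed

theorem mainTheorem8:
  fixes V :: "'a set" and E :: "'a set set" and cs :: "'a list"
    and K :: "('a set \<times> 'a set set) set"
  assumes "k_connected 3 V E"
    and "is_cycle V E cs" and "length cs \<ge> 4"
    and "conflict_component V E cs K"
  shows "set cs \<subseteq> (\<Union>X\<in>K. att cs X)"
proof
  fix v assume vin: "v \<in> set cs"
  show "v \<in> (\<Union>X\<in>K. att cs X)"
  proof (rule ccontr)
    assume nv: "v \<notin> (\<Union>X\<in>K. att cs X)"
    have dist: "distinct cs" and sub: "set cs \<subseteq> V" using assms(2) unfolding is_cycle_def by auto
    obtain p where p: "p < length cs" "cs!p = v" using vin by (auto simp: in_set_conv_nth)
    define ds where "ds = rotate p cs"
    have ne: "ds \<noteq> []" using vin ds_def by auto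
    have "cs \<noteq> []" using vin by auto
    then have "ds!0 = v" unfolding ds_def using p nth_rotate[of 0 cs p] by simp
    moreover have "att ds = att cs" unfolding ds_def by (rule att_rotate)
    ultimately have v0: "ds!0 \<notin> (\<Union>X\<in>K. att ds X)" using nv by simp
    have "distinct ds" "set ds \<subseteq> V" using dist sub ds_def by auto
    moreover have "conflict_component V E ds K"
      using assms(4) conflict_component_rotate[OF dist] ds_def by simp
    ultimately show False using core[OF assms(1) _ _ _ v0 ne] by blast
  qed
qed


end
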